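(* Let $G=(V,E)$ be a finite simple graph with at least one edge and no isolated vertices. The following are equivalent: (1) $G$ is uniformly dense; (2) $\operatorname{rank}(L(G))-\operatorname{rank}(L(G|A))\le \frac{|E|-|A|}{\rho(G)}$ for all nonempty $A\subseteq E$; (3) $\frac{n_0(L^1(G|A))}{|A|}\le\frac{n_0(L^1(G))}{|E|}$ for all nonempty $A\subseteq E$.
   Context: For $A\subseteq E$, $c(A)$ is the number of components of $(V,A)$, $\operatorname{rank}(A)=|V|-c(A)$, $\rho(A)=|A|/\operatorname{rank}(A)$, $\rho(G)=\rho(E)$; $G$ is uniformly dense if $\rho(A)\le\rho(G)$ for all nonempty $A$. $G|A$ is the graph obtained from $(V,A)$ by removing all isolated vertices. The normalized Laplacian $L(G)$ acts on functions $f:V\to\mathbb{R}$ by $Lf(v)=f(v)-\frac{1}{\deg v}\sum_{u:\{u,v\}\in E}f(u)$ (matrix $I-AD^{-1}$); $\operatorname{rank}$ of $L$ is the linear-algebraic rank. Fix an arbitrary orientation of each edge (an input and an output endpoint). The edge Laplacian $L^1(G)$ acts on $\gamma:E\to\mathbb{R}$ by, for $e$ with input $v$ and output $w$, $L^1\gamma(e)=\frac{\sum_{e_1:\,v\text{ input of }e_1}\gamma(e_1)-\sum_{e_2:\,v\text{ output of }e_2}\gamma(e_2)}{\deg v}-\frac{\sum_{e_1':\,w\text{ input of }e_1'}\gamma(e_1')-\sum_{e_2':\,w\text{ output of }e_2'}\gamma(e_2')}{\deg w}$. $n_0(\cdot)$ denotes the multiplicity of $0$ as an eigenvalue. *)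

theory Defs
  imports "Jordan_Normal_Form.DL_Rank" "Jordan_Normal_Form.Char_Poly"
begin

definition simple_graph :: "'a set \<Rightarrow> 'a set set \<Rightarrow> bool" where
  "simple_graph V E \<longleftrightarrow> finite V \<and>
     (\<forall>e\<in>E. \<exists>u v. u \<noteq> v \<and> u \<in> V \<and> v \<in> V \<and> e = {u, v})"

definition no_isolated :: "'a set \<Rightarrow> 'a set set \<Rightarrow> bool" where
  "no_isolated V E \<longleftrightarrow> (\<forall>v\<in>V. \<exists>e\<in>E. v \<in> e)"

definition ncomp :: "'a set \<Rightarrow> 'a set set \<Rightarrow> nat" where
  "ncomp V A = card (V // ({(u, v). {u, v} \<in> A}\<^sup>* \<inter> V \<times> V))"

definition grank :: "'a set \<Rightarrow> 'a set set \<Rightarrow> nat" where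
  "grank V A = card V - ncomp V A"

definition density :: "'a set \<Rightarrow> 'a set set \<Rightarrow> real" where
  "density V A = real (card A) / real (grank V A)"

definition uniformly_dense :: "'a set \<Rightarrow> 'a set set \<Rightarrow> bool" where
  "uniformly_dense V E \<longleftrightarrow>
     (\<forall>A. A \<subseteq> E \<and> A \<noteq> {} \<longrightarrow> density V A \<le> density V E)"

definition deg :: "'a set set \<Rightarrow> 'a \<Rightarrow> nat" where
  "deg A v = card {e \<in> A. v \<in> e}"

text \<open>An (arbitrary) enumeration of a finite set, used to index matrices.
  Ranks and characteristic polynomials do not depend on this choice.\<close>
definition enum_set :: "'a set \<Rightarrow> 'a list" where
  "enum_set S = (SOME xs. distinct xs \<and> set xs = S)"

definition norm_laplacian :: "'a set \<Rightarrow> 'a set set \<Rightarrow> real mat" where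
  "norm_laplacian W A = (let vs = enum_set W in
     mat (length vs) (length vs) (\<lambda>(i, j).
       (if i = j then 1 else 0)
       - (if {vs ! i, vs ! j} \<in> A then 1 / real (deg A (vs ! i)) else 0)))"

text \<open>Restriction G|A: vertex set = vertices incident to A, edge set A.\<close>
definition restr_vertices :: "'a set set \<Rightarrow> 'a set" where
  "restr_vertices A = \<Union>A"

definition mat_rank :: "real mat \<Rightarrow> nat" where
  "mat_rank M = vec_space.rank (dim_row M) M"

definition inc :: "('a set \<Rightarrow> 'a) \<Rightarrow> ('a set \<Rightarrow> 'a) \<Rightarrow> 'a \<Rightarrow> 'a set \<Rightarrow> real" where
  "inc src tgt v f = (if src f = v then 1 else 0) - (if tgt f = v then 1 else 0)"

definition edge_laplacian ::
  "('a set \<Rightarrow> 'a) \<Rightarrow> ('a set \<Rightarrow> 'a) \<Rightarrow> 'a set set \<Rightarrow> real mat" where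
  "edge_laplacian src tgt A = (let es = enum_set A in
     mat (length es) (length es) (\<lambda>(i, j).
       inc src tgt (src (es ! i)) (es ! j) / real (deg A (src (es ! i)))
     - inc src tgt (tgt (es ! i)) (es ! j) / real (deg A (tgt (es ! i)))))"

definition n0 :: "real mat \<Rightarrow> nat" where
  "n0 M = order 0 (char_poly M)"

end

theory Submission
  imports Defs "Jordan_Normal_Form.Jordan_Normal_Form_Uniqueness" "Jordan_Normal_Form.Jordan_Normal_Form_Existence"
begin

lemma rank_nullity_mat:
  fixes A :: "'a::field mat"
  assumes A: "A \<in> carrier_mat nr nc"
  shows "vec_space.rank nr A + kernel_dim A = nc"
proof -
  interpret V: vec_space "TYPE('a)" nc .
  interpret W: vec_space "TYPE('a)" nr .
  interpret K: kernel nr nc A by (unfold_locales, rule A)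
  interpret L: linear_map class_ring "module_vec TYPE('a) nc" "module_vec TYPE('a) nr" "\<lambda>v. A *\<^sub>v v"
    apply (intro linear_map.intro)
      apply (rule vec_vs)
     apply (rule vec_vs)
    apply (unfold_locales)
    unfolding LinearCombinations.module_hom_def using A by (auto simp: module_vec_simps mult_add_distrib_mat_vec mult_mat_vec class_ring_simps)
  have im: "L.imT = W.span (set (cols A))" 
    unfolding L.mod_hom.im_def W.col_space_def[symmetric] W.col_space_eq[OF A] using A
    by (auto simp: module_vec_simps)
  have ker: "L.kerT = mat_kernel A"
    unfolding L.mod_hom.ker_def mat_kernel_def using A by (auto simp: module_vec_simps)
  have "vectorspace.dim class_ring (W.vs L.imT) + vectorspace.dim class_ring (V.vs L.kerT) = V.dim"
    by (rule L.rank_nullity, simp)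
  then show ?thesis unfolding im ker W.rank_def V.dim_is_n kernel_dim_def using A by simp
qed
lemma kernel_dim_cong:
  fixes A B :: "'a::field mat"
  assumes "A \<in> carrier_mat nr nc" "B \<in> carrier_mat nr' nc" "mat_kernel A = mat_kernel B"
  shows "kernel_dim A = kernel_dim B"
  using assms unfolding kernel_dim_def by simp

lemma rank_mult_le:
  fixes A B :: "'a::field mat"
  assumes A: "A \<in> carrier_mat nr n" and B: "B \<in> carrier_mat n nc"
  shows "vec_space.rank nr (A * B) \<le> vec_space.rank nr A"
proof -
  interpret W: vec_space "TYPE('a)" nr .
  have AB: "A * B \<in> carrier_mat nr nc" using A B by auto
  have sub: "set (cols (A * B)) \<subseteq> W.span (set (cols A))"
  proof
    fix x assume "x \<in> set (cols (A * B))"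
    then obtain j where j: "j < nc" "x = col (A * B) j" using AB by (auto simp: cols_def)
    have "x = A *\<^sub>v col B j" using j A B by auto
    moreover have "col B j \<in> carrier_vec n" using B j by auto
    ultimately have "x \<in> W.col_space A" unfolding W.col_space_eq[OF A] using A by auto
    then show "x \<in> W.span (set (cols A))" unfolding W.col_space_def .
  qed
  have subA: "VectorSpace.subspace class_ring (W.span (set (cols A))) W.V"
    using A by (intro W.span_is_subspace) (auto simp: cols_def)
  have subAB: "VectorSpace.subspace class_ring (W.span (set (cols (A * B)))) W.V"
    using AB A B by (intro W.span_is_subspace) (auto simp: cols_def)
  have le: "W.span (set (cols (A * B))) \<subseteq> W.span (set (cols A))"
    using sub subA W.span_is_subset by (simp add: subspace_def)
  have s2: "VectorSpace.subspace class_ring (W.span (set (cols (A * B)))) (W.vs (W.span (set (cols A))))"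
    by (rule W.nested_subspaces[OF subA subAB le])
  have fdA: "vectorspace.fin_dim class_ring (W.vs (W.span (set (cols A))))"
    using W.fin_dim_span_cols[OF A] .
  have fdAB: "vectorspace.fin_dim class_ring (W.vs (W.span (set (cols (A * B)))))"
    using W.fin_dim_span_cols[OF AB] .
  show ?thesis unfolding W.rank_def
    using vectorspace.subspace_dim[OF W.subspace_is_vs[OF subA] s2 fdA] fdAB by auto
qed

lemma kernel_quad:
  fixes X :: "real mat"
  assumes X: "X \<in> carrier_mat nr nc" and p: "\<forall>k<nr. p k > 0"
  shows "mat_kernel (transpose_mat X * mat nr nr (\<lambda>(i,j). if i = j then p i else 0) * X) = mat_kernel X"
proof -
  define P where "P = mat nr nr (\<lambda>(i,j). if i = j then p i else 0)"
  have P: "P \<in> carrier_mat nr nr" unfolding P_def by auto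
  have M: "transpose_mat X * P * X \<in> carrier_mat nc nc" using X P by auto
  have eq: "(transpose_mat X * P * X) *\<^sub>v v = transpose_mat X *\<^sub>v (P *\<^sub>v (X *\<^sub>v v))"
    if v: "v \<in> carrier_vec nc" for v
  proof -
    have "(transpose_mat X * P * X) *\<^sub>v v = (transpose_mat X * P) *\<^sub>v (X *\<^sub>v v)"
      by (rule assoc_mult_mat_vec) (use X P v in auto)
    also have "\<dots> = transpose_mat X *\<^sub>v (P *\<^sub>v (X *\<^sub>v v))"
      by (rule assoc_mult_mat_vec) (use X P v in auto)
    finally show ?thesis .
  qed
  have Pw: "(P *\<^sub>v w) $ k = p k * w $ k" if "w \<in> carrier_vec nr" "k < nr" for w k
  proof -
    have "(P *\<^sub>v w) $ k = (\<Sum>i\<in>{0..<nr}. (if k = i then p k else 0) * w $ i)"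
      using that unfolding P_def by (auto simp: scalar_prod_def row_def)
    also have "\<dots> = (\<Sum>i\<in>{0..<nr}. if k = i then p k * w $ i else 0)"
      by (rule sum.cong) auto
    also have "\<dots> = p k * w $ k" using that by simp
    finally show ?thesis .
  qed
  show ?thesis unfolding P_def[symmetric]
  proof (intro equalityI subsetI)
    fix v assume "v \<in> mat_kernel (transpose_mat X * P * X)"
    then have v: "v \<in> carrier_vec nc" and Mv: "(transpose_mat X * P * X) *\<^sub>v v = 0\<^sub>v nc"
      using mat_kernelD[OF M] by auto
    define w where "w = X *\<^sub>v v"
    have w: "w \<in> carrier_vec nr" unfolding w_def using X v by auto
    have Pw': "P *\<^sub>v w \<in> carrier_vec nr" using P w by auto
    have "0 = (transpose_mat X *\<^sub>v (P *\<^sub>v w)) \<bullet> v"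
      using Mv eq[OF v] v unfolding w_def by simp
    also have "\<dots> = (P *\<^sub>v w) \<bullet> w"
      unfolding w_def by (rule transpose_vec_mult_scalar[OF X v], insert Pw', simp add: w_def)
    also have "\<dots> = (\<Sum>k\<in>{0..<nr}. p k * (w $ k)^2)"
      unfolding scalar_prod_def using w Pw[OF w] by (auto simp: power2_eq_square intro!: sum.cong)
    finally have s0: "(\<Sum>k\<in>{0..<nr}. p k * (w $ k)^2) = 0" by simp
    have nn: "\<And>k. k \<in> {0..<nr} \<Longrightarrow> 0 \<le> p k * (w $ k)^2" using p by (auto intro: less_imp_le)
    have "\<forall>k\<in>{0..<nr}. p k * (w $ k)^2 = 0"
      using sum_nonneg_eq_0_iff[of "{0..<nr}" "\<lambda>k. p k * (w $ k)^2"] nn s0 by blast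
    then have "\<forall>k<nr. w $ k = 0" using p by (metis atLeastLessThan_iff less_numeral_extra(3) mult_eq_0_iff zero_eq_power2 zero_le)
    then have "w = 0\<^sub>v nr" using w by (intro eq_vecI) auto
    then show "v \<in> mat_kernel X" unfolding w_def using X v by (intro mat_kernelI) auto
  next
    fix v assume "v \<in> mat_kernel X"
    then have v: "v \<in> carrier_vec nc" and Xv: "X *\<^sub>v v = 0\<^sub>v nr" using mat_kernelD[OF X] by auto
    have z: "A *\<^sub>v 0\<^sub>v k = 0\<^sub>v m" if "A \<in> carrier_mat m k" for A :: "real mat" and m k
      by (rule eq_vecI) (use that in \<open>auto simp: scalar_prod_def\<close>)
    have "(transpose_mat X * P * X) *\<^sub>v v = 0\<^sub>v nc"
      unfolding eq[OF v] Xv using z[OF P] z[of "transpose_mat X" nc nr] X by auto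
    then show "v \<in> mat_kernel (transpose_mat X * P * X)" using M v by (intro mat_kernelI) auto
  qed
qed

lemma rank_transpose_le:
  fixes X :: "real mat"
  assumes X: "X \<in> carrier_mat nr nc"
  shows "vec_space.rank nc (transpose_mat X) \<le> vec_space.rank nr X"
proof -
  define P :: "real mat" where "P = mat nc nc (\<lambda>(i,j). if i = j then 1 else 0)"
  have P: "P \<in> carrier_mat nc nc" unfolding P_def by auto
  have XT: "transpose_mat X \<in> carrier_mat nc nr" using X by auto
  have kq: "mat_kernel (transpose_mat (transpose_mat X) * P * transpose_mat X) = mat_kernel (transpose_mat X)"
    unfolding P_def by (rule kernel_quad[OF XT]) auto
  have eqM: "transpose_mat (transpose_mat X) * P * transpose_mat X = X * (P * transpose_mat X)"
    using X P by (simp add: assoc_mult_mat[of X nr nc P nc _ nr])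
  have M: "X * (P * transpose_mat X) \<in> carrier_mat nr nr" using X P by auto
  have "kernel_dim (X * (P * transpose_mat X)) = kernel_dim (transpose_mat X)"
    by (rule kernel_dim_cong[OF M XT]) (use kq eqM in simp)
  moreover have "vec_space.rank nr (X * (P * transpose_mat X)) + kernel_dim (X * (P * transpose_mat X)) = nr"
    by (rule rank_nullity_mat[OF M])
  moreover have "vec_space.rank nc (transpose_mat X) + kernel_dim (transpose_mat X) = nr"
    by (rule rank_nullity_mat[OF XT])
  moreover have "vec_space.rank nr (X * (P * transpose_mat X)) \<le> vec_space.rank nr X"
    by (rule rank_mult_le[OF X]) (use P X in auto)
  ultimately show ?thesis by linarith
qed

lemma rank_transpose:
  fixes X :: "real mat"
  assumes X: "X \<in> carrier_mat nr nc"
  shows "vec_space.rank nc (transpose_mat X) = vec_space.rank nr X"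
  using rank_transpose_le[OF X] rank_transpose_le[of "transpose_mat X" nc nr] X by auto

lemma real_sym_eigen_real:
  fixes M :: "real mat"
  assumes M: "M \<in> carrier_mat n n" and symM: "transpose_mat M = M"
    and ev: "eigenvalue (map_mat complex_of_real M) a"
  shows "a = complex_of_real (Re a)"
proof -
  let ?Mc = "map_mat complex_of_real M"
  have Mc: "?Mc \<in> carrier_mat n n" using M by auto
  have symc: "transpose_mat ?Mc = ?Mc" using symM by (metis map_mat_transpose)
  from ev obtain v where v: "v \<in> carrier_vec n" "v \<noteq> 0\<^sub>v n" "?Mc *\<^sub>v v = a \<cdot>\<^sub>v v"
    unfolding eigenvalue_def eigenvector_def using M by auto
  define c where "c = conjugate v"
  have c: "c \<in> carrier_vec n" unfolding c_def using v by auto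
  have conjM: "?Mc *\<^sub>v c = conjugate (?Mc *\<^sub>v v)"
  proof (rule eq_vecI)
    fix i assume "i < dim_vec (conjugate (?Mc *\<^sub>v v))"
    then have i: "i < n" using M by auto
    have "(?Mc *\<^sub>v c) $ i = (\<Sum>j = 0..<n. complex_of_real (M $$ (i, j)) * cnj (v $ j))"
      using i M v unfolding c_def by (auto simp: scalar_prod_def conjugate_complex_def)
    also have "\<dots> = cnj (\<Sum>j = 0..<n. complex_of_real (M $$ (i, j)) * v $ j)"
      by (simp add: cnj_sum)
    also have "\<dots> = conjugate (?Mc *\<^sub>v v) $ i"
      using i M v(1) by (auto simp: scalar_prod_def conjugate_complex_def)
    finally show "(?Mc *\<^sub>v c) $ i = conjugate (?Mc *\<^sub>v v) $ i" .
  qed (use M in auto)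
  have "a * (v \<bullet> c) = (?Mc *\<^sub>v v) \<bullet> c"
    using v c by (simp add: smult_scalar_prod_distrib)
  also have "\<dots> = (transpose_mat ?Mc *\<^sub>v v) \<bullet> c" using symc by simp
  also have "\<dots> = v \<bullet> (?Mc *\<^sub>v c)" by (rule transpose_vec_mult_scalar[OF Mc c v(1)])
  also have "\<dots> = v \<bullet> (cnj a \<cdot>\<^sub>v c)"
  proof -
    have "?Mc *\<^sub>v c = conjugate (a \<cdot>\<^sub>v v)" using conjM v(3) by simp
    also have "\<dots> = cnj a \<cdot>\<^sub>v c" unfolding c_def
      using conjugate_smult_vec[of a v] by (simp add: conjugate_complex_def)
    finally show ?thesis by simp
  qed
  also have "\<dots> = cnj a * (v \<bullet> c)" using v c by (simp add: scalar_prod_smult_distrib)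
  finally have eq: "a * (v \<bullet> c) = cnj a * (v \<bullet> c)" .
  have "v \<bullet> c \<noteq> 0" unfolding c_def using conjugate_square_greater_0_vec[OF v(1)] v(2) by auto
  with eq have "a = cnj a" by simp
  then show ?thesis by (metis Reals_cnj_iff complex_is_Real_iff of_real_Re)
qed

lemma real_sym_char_poly_split:
  fixes M :: "real mat"
  assumes M: "M \<in> carrier_mat n n" and symM: "transpose_mat M = M"
  shows "\<exists>es. char_poly M = (\<Prod>a\<leftarrow>es. [:- a, 1:])"
proof -
  have cph: "map_poly complex_of_real (char_poly M) = char_poly (map_mat complex_of_real M)"
    using comm_ring_hom.char_poly_hom[OF of_real_hom.comm_ring_hom_axioms[where 'a=complex] M] by (rule sym)
  interpret H: map_poly_inj_comm_ring_hom "complex_of_real"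
    by (intro map_poly_inj_comm_ring_hom.intro of_real_hom.inj_comm_ring_hom_axioms)
  let ?Mc = "map_mat complex_of_real M"
  have Mc: "?Mc \<in> carrier_mat n n" using M by auto
  obtain as where cp: "char_poly ?Mc = (\<Prod>a\<leftarrow>as. [:- a, 1:])"
    using char_poly_factorized[OF Mc] by auto
  have re: "a = complex_of_real (Re a)" if a: "a \<in> set as" for a
  proof -
    have "poly (char_poly ?Mc) a = 0" unfolding cp poly_prod_list using a
      by (auto simp: prod_list_zero_iff)
    then have "eigenvalue ?Mc a" using eigenvalue_root_char_poly[OF Mc] by simp
    then show ?thesis by (rule real_sym_eigen_real[OF M symM])
  qed
  define es where "es = map Re as"
  have as: "as = map complex_of_real es" unfolding es_def using re
    by (induct as) auto
  have "map_poly complex_of_real (char_poly M) = char_poly (map_mat complex_of_real M)"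
    by fact
  also have "\<dots> = (\<Prod>a\<leftarrow>es. [:- complex_of_real a, 1:])" unfolding cp as by (simp add: o_def)
  also have "\<dots> = map_poly complex_of_real (\<Prod>a\<leftarrow>es. [:- a, 1:])"
    by (simp add: H.hom_prod_list o_def)
  finally have "char_poly M = (\<Prod>a\<leftarrow>es. [:- a, 1:])" by simp
  then show ?thesis by blast
qed

lemma kernel_pow_sym:
  fixes M :: "real mat"
  assumes M: "M \<in> carrier_mat n n" and symM: "transpose_mat M = M"
  shows "mat_kernel (M ^\<^sub>m Suc k) = mat_kernel M"
proof -
  have "mat_kernel (transpose_mat M * mat n n (\<lambda>(i,j). if i = j then 1 else 0) * M) = mat_kernel M"
    by (rule kernel_quad[OF M]) auto
  then have kMM: "mat_kernel (M * M) = mat_kernel M"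
    using M symM by (simp add: one_mat_def[symmetric])
  show ?thesis
  proof (induct k)
    case 0
    then show ?case using M by simp
  next
    case (Suc k)
    have Pk: "M ^\<^sub>m Suc k \<in> carrier_mat n n" using M by auto
    have MM: "M * M \<in> carrier_mat n n" using M by auto
    show ?case
    proof (intro equalityI subsetI)
      fix v assume "v \<in> mat_kernel (M ^\<^sub>m Suc (Suc k))"
      moreover have PSS: "M ^\<^sub>m Suc (Suc k) \<in> carrier_mat n n" using M by auto
      ultimately have v: "v \<in> carrier_vec n" and z': "M ^\<^sub>m Suc (Suc k) *\<^sub>v v = 0\<^sub>v n"
        using mat_kernelD by blast+
      have z: "(M ^\<^sub>m Suc k * M) *\<^sub>v v = 0\<^sub>v n" using z' by (simp only: pow_mat.simps(2))
      have "M ^\<^sub>m Suc k *\<^sub>v (M *\<^sub>v v) = 0\<^sub>v n" using z assoc_mult_mat_vec[OF Pk M v] by simp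
      then have "M *\<^sub>v v \<in> mat_kernel (M ^\<^sub>m Suc k)" using Pk M v by (intro mat_kernelI) auto
      then have "M *\<^sub>v v \<in> mat_kernel M" using Suc by simp
      then have "M *\<^sub>v (M *\<^sub>v v) = 0\<^sub>v n" using mat_kernelD[OF M] by auto
      then have "(M * M) *\<^sub>v v = 0\<^sub>v n" using assoc_mult_mat_vec[OF M M v] by simp
      then have "v \<in> mat_kernel (M * M)" using MM v by (intro mat_kernelI) auto
      then show "v \<in> mat_kernel M" using kMM by simp
    next
      fix v assume "v \<in> mat_kernel M"
      then have v: "v \<in> carrier_vec n" and z: "M *\<^sub>v v = 0\<^sub>v n" using mat_kernelD[OF M] by auto
      have "v \<in> mat_kernel (M ^\<^sub>m Suc k)" using Suc \<open>v \<in> mat_kernel M\<close> by simp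
      then have z2: "M ^\<^sub>m Suc k *\<^sub>v v = 0\<^sub>v n" using mat_kernelD[OF Pk] by auto
      have "(M ^\<^sub>m Suc k * M) *\<^sub>v v = M ^\<^sub>m Suc k *\<^sub>v (M *\<^sub>v v)" using assoc_mult_mat_vec[OF Pk M v] .
      also have "\<dots> = M ^\<^sub>m Suc k *\<^sub>v 0\<^sub>v n" using z by simp
      also have "\<dots> = 0\<^sub>v n" by (rule eq_vecI) (use Pk in \<open>auto simp: scalar_prod_def\<close>)
      finally have "(M ^\<^sub>m Suc (Suc k)) *\<^sub>v v = 0\<^sub>v n" by simp
      then show "v \<in> mat_kernel (M ^\<^sub>m Suc (Suc k))" using v M by (intro mat_kernelI) auto
    qed
  qed
qed

lemma n0_sym:
  fixes M :: "real mat"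
  assumes M: "M \<in> carrier_mat n n" and symM: "transpose_mat M = M"
  shows "order 0 (char_poly M) = kernel_dim M"
proof -
  obtain es where es: "char_poly M = (\<Prod>a\<leftarrow>es. [:- a, 1:])"
    using real_sym_char_poly_split[OF M symM] by auto
  obtain n_as where jnf: "jordan_nf M n_as" using jordan_nf_exists[OF M es] by auto
  have cp0: "char_poly M \<noteq> 0" using degree_monic_char_poly[OF M] by auto
  have deg: "degree (char_poly M) = n" using degree_monic_char_poly[OF M] by auto
  have le: "m \<le> n" if "m \<in> set (map fst (filter (\<lambda>(m, e). e = 0) n_as))" for m
  proof -
    from that obtain e where "(m, e) \<in> set n_as" "e = 0" by auto
    then have "m \<le> order 0 (char_poly M)" using jordan_nf_block_size_order_bound[OF jnf] by auto
    also have "\<dots> \<le> n" using order_degree[OF cp0] deg by simp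
    finally show ?thesis .
  qed
  have "order 0 (char_poly M) = sum_list (map fst (filter (\<lambda>na. snd na = 0) n_as))"
    by (rule jordan_nf_order[OF jnf])
  also have "\<dots> = sum_list (map (min (Suc n)) (map fst (filter (\<lambda>(m, e). e = 0) n_as)))"
  proof -
    have f: "filter (\<lambda>na. snd na = 0) n_as = filter (\<lambda>(m, e). e = 0) n_as"
      by (rule filter_cong) auto
    have eq: "map (min (Suc n)) (map fst (filter (\<lambda>(m, e). e = 0) n_as)) = map fst (filter (\<lambda>(m, e). e = 0) n_as)"
      by (rule map_idI) (use le in force)
    show ?thesis unfolding f eq by (rule refl)
  qed
  also have "\<dots> = dim_gen_eigenspace M 0 (Suc n)"
    by (rule dim_gen_eigenspace[OF jnf, symmetric])
  also have "\<dots> = kernel_dim (M ^\<^sub>m Suc n)"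
  proof -
    have "char_matrix M 0 = M" unfolding char_matrix_def using M by auto
    then show ?thesis unfolding dim_gen_eigenspace_def by simp
  qed
  also have "\<dots> = kernel_dim M"
    by (rule kernel_dim_cong[OF _ M kernel_pow_sym[OF M symM]]) (use M in auto)
  finally show ?thesis .
qed


lemma enum_set: assumes "finite S" shows "distinct (enum_set S) \<and> set (enum_set S) = S"
proof -
  have "\<exists>xs. distinct xs \<and> set xs = S" using finite_distinct_list[OF assms] by blast
  then show ?thesis unfolding enum_set_def by (rule someI_ex)
qed

lemma length_enum_set: "finite S \<Longrightarrow> length (enum_set S) = card S"
  using enum_set[of S] distinct_card by fastforce

lemma sum_distinct_nth:
  assumes "distinct xs"
  shows "(\<Sum>i<length xs. g (xs ! i)) = (\<Sum>x\<in>set xs. g x)"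
proof -
  have inj: "inj_on (nth xs) {..<length xs}" using assms by (simp add: inj_on_def nth_eq_iff_index_eq)
  have img: "nth xs ` {..<length xs} = set xs" by (auto simp: in_set_conv_nth)
  show ?thesis using sum.reindex[OF inj, of g] img by simp
qed

lemma diag_mult:
  fixes Y :: "'a::comm_ring_1 mat"
  assumes Y: "Y \<in> carrier_mat n nc"
  shows "mat n n (\<lambda>(i,j). if i = j then p i else 0) * Y = mat n nc (\<lambda>(i,j). p i * Y $$ (i,j))"
proof (rule eq_matI)
  fix i j assume i: "i < dim_row (mat n nc (\<lambda>(i,j). p i * Y $$ (i,j)))" and j: "j < dim_col (mat n nc (\<lambda>(i,j). p i * Y $$ (i,j)))"
  then have i: "i < n" and j: "j < nc" by auto
  have "(mat n n (\<lambda>(i,j). if i = j then p i else 0) * Y) $$ (i,j) = (\<Sum>k\<in>{0..<n}. (if i = k then p i else 0) * Y $$ (k, j))"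
    using i j Y by (auto simp: scalar_prod_def row_def col_def intro!: sum.cong)
  also have "\<dots> = (\<Sum>k\<in>{0..<n}. if i = k then p i * Y $$ (i, j) else 0)"
    by (rule sum.cong) auto
  also have "\<dots> = p i * Y $$ (i,j)" using i by simp
  finally show "(mat n n (\<lambda>(i,j). if i = j then p i else 0) * Y) $$ (i,j) = mat n nc (\<lambda>(i,j). p i * Y $$ (i,j)) $$ (i,j)"
    using i j by simp
qed (use Y in auto)

locale orgraph =
  fixes A :: "'a set set" and src tgt :: "'a set \<Rightarrow> 'a"
  assumes finA: "finite A"
    and orient: "\<And>e. e \<in> A \<Longrightarrow> e = {src e, tgt e}"
    and dist_st: "\<And>e. e \<in> A \<Longrightarrow> src e \<noteq> tgt e"
begin

definition "W = \<Union>A"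
definition "vs = enum_set W"
definition "es = enum_set A"
definition "nW = card W"
definition "mA = card A"
definition "d u = real (deg A u)"
definition "Bm = mat nW mA (\<lambda>(i,j). inc src tgt (vs ! i) (es ! j))"
definition "Dm = mat nW nW (\<lambda>(i,j). if i = j then 1 / d (vs ! i) else 0)"

lemma finW: "finite W"
  unfolding W_def using finA orient by (metis finite.emptyI finite.insertI finite_Union)

lemma vs: "distinct vs" "set vs = W" "length vs = nW"
  unfolding vs_def nW_def using enum_set[OF finW] length_enum_set[OF finW] by auto

lemma es: "distinct es" "set es = A" "length es = mA"
  unfolding es_def mA_def using enum_set[OF finA] length_enum_set[OF finA] by auto

lemma vs_W: "i < nW \<Longrightarrow> vs ! i \<in> W" using vs by (metis nth_mem)
lemma es_A: "j < mA \<Longrightarrow> es ! j \<in> A" using es by (metis nth_mem)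

lemma src_W: "e \<in> A \<Longrightarrow> src e \<in> W" unfolding W_def using orient by blast
lemma tgt_W: "e \<in> A \<Longrightarrow> tgt e \<in> W" unfolding W_def using orient by blast

lemma dpos: assumes "u \<in> W" shows "d u > 0"
proof -
  from assms obtain e where "e \<in> A" "u \<in> e" unfolding W_def by auto
  then have "{e\<in>A. u \<in> e} \<noteq> {}" by auto
  moreover have "finite {e\<in>A. u \<in> e}" using finA by auto
  ultimately show ?thesis unfolding d_def deg_def by (simp add: card_gt_0_iff)
qed

lemma no_loop: "{u} \<notin> A"
proof
  assume "{u} \<in> A"
  then have "{u} = {src {u}, tgt {u}}" "src {u} \<noteq> tgt {u}" using orient dist_st by auto
  then show False by (metis insert_absorb insert_iff singletonD)
qed

lemma inc_prod:
  assumes e: "e \<in> A"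
  shows "inc src tgt u e * inc src tgt w e =
    (if u = w then (if u \<in> e then 1 else 0) else if e = {u, w} then -1 else 0)"
proof -
  define s where "s = src e"
  define t where "t = tgt e"
  have et: "e = {s, t}" and st: "s \<noteq> t" using orient[OF e] dist_st[OF e] unfolding s_def t_def by auto
  have i1: "inc src tgt x e = (if s = x then 1 else 0) - (if t = x then 1 else 0)" for x
    by (simp add: inc_def s_def t_def)
  have m1: "(x \<in> e) = (x = s \<or> x = t)" for x using et by auto
  have m2: "(e = {u, w}) = ({s, t} = {u, w})" using et by auto
  show ?thesis unfolding i1 m1 m2 using st
    by (cases "u = s"; cases "u = t"; cases "w = s"; cases "w = t") (auto simp: doubleton_eq_iff)
qed

lemma Bm: "Bm \<in> carrier_mat nW mA" unfolding Bm_def by auto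
lemma Dm: "Dm \<in> carrier_mat nW nW" unfolding Dm_def by auto

lemma BBt: "Bm * transpose_mat Bm = mat nW nW (\<lambda>(i,j). if i = j then d (vs ! i)
    else - (if {vs ! i, vs ! j} \<in> A then 1 else 0))"
proof (rule eq_matI)
  fix i j assume "i < dim_row (mat nW nW (\<lambda>(i,j). if i = j then d (vs ! i)
    else - (if {vs ! i, vs ! j} \<in> A then 1 else 0)))"
    "j < dim_col (mat nW nW (\<lambda>(i,j). if i = j then d (vs ! i)
    else - (if {vs ! i, vs ! j} \<in> A then 1 else 0)))"
  then have i: "i < nW" and j: "j < nW" by auto
  let ?u = "vs ! i" and ?w = "vs ! j"
  have "(Bm * transpose_mat Bm) $$ (i, j) = (\<Sum>l<mA. inc src tgt ?u (es ! l) * inc src tgt ?w (es ! l))"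
    using i j unfolding Bm_def by (auto simp: scalar_prod_def atLeast0LessThan)
  also have "\<dots> = (\<Sum>e\<in>A. inc src tgt ?u e * inc src tgt ?w e)"
    using sum_distinct_nth[OF es(1), of "\<lambda>e. inc src tgt ?u e * inc src tgt ?w e"] es by simp
  also have "\<dots> = (\<Sum>e\<in>A. (if ?u = ?w then (if ?u \<in> e then 1 else 0) else if e = {?u, ?w} then -1 else 0))"
    by (rule sum.cong) (auto simp: inc_prod)
  also have "\<dots> = (if i = j then d ?u else - (if {?u, ?w} \<in> A then 1 else 0))"
  proof (cases "i = j")
    case True
    then show ?thesis using finA by (simp add: d_def deg_def sum.If_cases Int_def)
  next
    case False
    then have "?u \<noteq> ?w" using vs i j by (simp add: nth_eq_iff_index_eq)
    then show ?thesis using False finA by (simp add: sum.delta')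
  qed
  finally show "(Bm * transpose_mat Bm) $$ (i, j) = mat nW nW (\<lambda>(i,j). if i = j then d (vs ! i)
    else - (if {vs ! i, vs ! j} \<in> A then 1 else 0)) $$ (i, j)" using i j by simp
qed (auto simp: Bm_def)

lemma norm_lap_eq: "norm_laplacian W A = Dm * (Bm * transpose_mat Bm)"
proof -
  have "Dm * (Bm * transpose_mat Bm) = mat nW nW (\<lambda>(i,j). (1 / d (vs ! i)) * (Bm * transpose_mat Bm) $$ (i,j))"
    unfolding Dm_def by (rule diag_mult) (use Bm in auto)
  also have "\<dots> = norm_laplacian W A"
  proof (rule eq_matI)
    fix i j assume "i < dim_row (norm_laplacian W A)" "j < dim_col (norm_laplacian W A)"
    then have i: "i < nW" and j: "j < nW" unfolding norm_laplacian_def Let_def vs_def[symmetric] using vs by auto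
    have dp: "d (vs ! i) > 0" using dpos vs_W i by auto
    show "mat nW nW (\<lambda>(i,j). (1 / d (vs ! i)) * (Bm * transpose_mat Bm) $$ (i,j)) $$ (i, j) = norm_laplacian W A $$ (i, j)"
      unfolding norm_laplacian_def Let_def vs_def[symmetric] BBt using i j vs(3) dp no_loop
      by (auto simp: d_def)
  qed (auto simp: norm_laplacian_def Let_def vs_def[symmetric] vs)
  finally show ?thesis by simp
qed

definition "L1 = mat mA mA (\<lambda>(i,j). \<Sum>k\<in>{0..<nW}. Bm $$ (k,i) * (1 / d (vs ! k) * Bm $$ (k,j)))"

lemma BtDB: "transpose_mat Bm * Dm * Bm = L1"
proof -
  have DB: "Dm * Bm = mat nW mA (\<lambda>(k,j). 1 / d (vs ! k) * Bm $$ (k,j))"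
    unfolding Dm_def by (rule diag_mult[OF Bm])
  have "transpose_mat Bm * Dm * Bm = transpose_mat Bm * (Dm * Bm)"
    by (rule assoc_mult_mat[of _ mA nW _ nW _ mA]) (use Bm Dm in auto)
  also have "\<dots> = L1" unfolding DB L1_def
    by (rule eq_matI) (use Bm in \<open>auto simp: scalar_prod_def\<close>)
  finally show ?thesis .
qed

lemma L1_sym: "transpose_mat L1 = L1"
  unfolding L1_def by (rule eq_matI) (auto simp: mult.commute mult.left_commute)

lemma L1_carrier: "L1 \<in> carrier_mat mA mA" unfolding L1_def by auto

lemma inc_other: "e \<in> A \<Longrightarrow> u \<noteq> src e \<Longrightarrow> u \<noteq> tgt e \<Longrightarrow> inc src tgt u e = 0"
  unfolding inc_def by auto

lemma edge_lap_eq: "edge_laplacian src tgt A = L1"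
proof (rule eq_matI)
  show "dim_row (edge_laplacian src tgt A) = dim_row L1" "dim_col (edge_laplacian src tgt A) = dim_col L1"
    unfolding edge_laplacian_def L1_def Let_def es_def[symmetric] using es by auto
  fix i j assume "i < dim_row L1" "j < dim_col L1"
  then have i: "i < mA" and j: "j < mA" unfolding L1_def by auto
  define e where "e = es ! i"
  define f where "f = es ! j"
  have e: "e \<in> A" and f: "f \<in> A" using es_A i j unfolding e_def f_def by auto
  define s where "s = src e"
  define t where "t = tgt e"
  have st: "s \<noteq> t" "s \<in> W" "t \<in> W" using dist_st[OF e] src_W[OF e] tgt_W[OF e] unfolding s_def t_def by auto
  define h where "h u = inc src tgt u e * (1 / d u * inc src tgt u f)" for u
  have "L1 $$ (i,j) = (\<Sum>k<nW. h (vs ! k))"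
    unfolding L1_def h_def Bm_def e_def f_def using i j by (auto simp: atLeast0LessThan intro!: sum.cong)
  also have "\<dots> = (\<Sum>u\<in>W. h u)" using sum_distinct_nth[OF vs(1), of h] vs by simp
  also have "\<dots> = (\<Sum>u\<in>{s,t}. h u)"
    by (rule sum.mono_neutral_right) (use finW st in \<open>auto simp: h_def inc_other[OF e] s_def t_def\<close>)
  also have "\<dots> = h s + h t" using st by simp
  also have "\<dots> = inc src tgt s f / d s - inc src tgt t f / d t"
    unfolding h_def inc_def s_def t_def using st(1) unfolding s_def t_def by auto
  also have "\<dots> = edge_laplacian src tgt A $$ (i,j)"
    unfolding edge_laplacian_def Let_def es_def[symmetric] using i j es
    by (simp add: e_def[symmetric] f_def[symmetric] s_def t_def d_def)
  finally show "edge_laplacian src tgt A $$ (i,j) = L1 $$ (i,j)" by simp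
qed

lemma n0_edge: "n0 (edge_laplacian src tgt A) = kernel_dim Bm"
proof -
  have "n0 (edge_laplacian src tgt A) = kernel_dim L1"
    unfolding n0_def edge_lap_eq by (rule n0_sym[OF L1_carrier L1_sym])
  also have "\<dots> = kernel_dim Bm"
  proof (rule kernel_dim_cong[OF L1_carrier Bm])
    have "mat_kernel (transpose_mat Bm * mat nW nW (\<lambda>(i,j). if i = j then 1 / d (vs ! i) else 0) * Bm) = mat_kernel Bm"
      by (rule kernel_quad[OF Bm]) (use dpos vs_W in auto)
    then show "mat_kernel L1 = mat_kernel Bm" unfolding BtDB[symmetric] Dm_def .
  qed
  finally show ?thesis .
qed

lemma n0_edge_rank: "n0 (edge_laplacian src tgt A) = mA - vec_space.rank nW Bm"
  using n0_edge rank_nullity_mat[OF Bm] by simp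

lemma kernel_Dm: assumes Y: "Y \<in> carrier_mat nW nc" shows "mat_kernel (Dm * Y) = mat_kernel Y"
proof -
  define C where "C = mat nW nW (\<lambda>(i,j). if i = j then d (vs ! i) else 0)"
  have C: "C \<in> carrier_mat nW nW" unfolding C_def by auto
  have "C * Dm = mat nW nW (\<lambda>(i,j). d (vs ! i) * Dm $$ (i,j))"
    unfolding C_def by (rule diag_mult[OF Dm])
  also have "\<dots> = 1\<^sub>m nW"
    by (rule eq_matI) (use dpos vs_W in \<open>force simp: Dm_def\<close>)+
  finally have inv: "C * Dm = 1\<^sub>m nW" .
  show ?thesis by (rule mat_kernel_mult_eq[OF Y Dm C inv])
qed

lemma rank_norm_lap: "mat_rank (norm_laplacian W A) = vec_space.rank nW Bm"
proof -
  have BT: "transpose_mat Bm \<in> carrier_mat mA nW" using Bm by auto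
  have BBT: "Bm * transpose_mat Bm \<in> carrier_mat nW nW" using Bm by auto
  have L: "norm_laplacian W A \<in> carrier_mat nW nW" unfolding norm_lap_eq using Dm BBT by auto
  have k1: "mat_kernel (norm_laplacian W A) = mat_kernel (Bm * transpose_mat Bm)"
    unfolding norm_lap_eq by (rule kernel_Dm[OF BBT])
  have "mat_kernel (transpose_mat (transpose_mat Bm) * mat mA mA (\<lambda>(i,j). if i = j then 1 else 0) * transpose_mat Bm) = mat_kernel (transpose_mat Bm)"
    by (rule kernel_quad[OF BT]) auto
  then have k2: "mat_kernel (Bm * transpose_mat Bm) = mat_kernel (transpose_mat Bm)"
    using Bm by (simp add: one_mat_def[symmetric])
  have kd: "kernel_dim (norm_laplacian W A) = kernel_dim (transpose_mat Bm)"
    by (rule kernel_dim_cong[OF L BT]) (use k1 k2 in simp)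
  have "dim_row (norm_laplacian W A) = nW" using L by auto
  then have "mat_rank (norm_laplacian W A) + kernel_dim (norm_laplacian W A) = nW"
    unfolding mat_rank_def using rank_nullity_mat[OF L] by simp
  moreover have "vec_space.rank mA (transpose_mat Bm) + kernel_dim (transpose_mat Bm) = nW"
    by (rule rank_nullity_mat[OF BT])
  moreover have "vec_space.rank mA (transpose_mat Bm) = vec_space.rank nW Bm"
    by (rule rank_transpose[OF Bm])
  ultimately show ?thesis using kd by linarith
qed

lemma rank_Bm: "vec_space.rank nW Bm + kernel_dim (transpose_mat Bm) = nW"
  using rank_nullity_mat[of "transpose_mat Bm" mA nW] Bm rank_transpose[OF Bm] by simp

definition "idx u = find_index vs u"

lemma idx: "u \<in> W \<Longrightarrow> idx u < nW \<and> vs ! idx u = u"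
  unfolding idx_def using find_index_leq_length find_index_in_set vs by metis

lemma idx_nth: "i < nW \<Longrightarrow> idx (vs ! i) = i"
  using idx[OF vs_W] vs(1,3) by (metis nth_eq_iff_index_eq)

lemma BT_app: assumes f: "f \<in> carrier_vec nW" and j: "j < mA"
  shows "(transpose_mat Bm *\<^sub>v f) $ j = f $ idx (src (es ! j)) - f $ idx (tgt (es ! j))"
proof -
  define e where "e = es ! j"
  have e: "e \<in> A" using es_A j unfolding e_def by auto
  define s where "s = src e"
  define t where "t = tgt e"
  have st: "s \<noteq> t" "s \<in> W" "t \<in> W" using dist_st[OF e] src_W[OF e] tgt_W[OF e] unfolding s_def t_def by auto
  define h where "h u = inc src tgt u e * f $ idx u" for u
  have "(transpose_mat Bm *\<^sub>v f) $ j = (\<Sum>k<nW. h (vs ! k))"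
    using j f Bm unfolding h_def Bm_def e_def
    by (auto simp: scalar_prod_def atLeast0LessThan idx_nth intro!: sum.cong)
  also have "\<dots> = (\<Sum>u\<in>W. h u)" using sum_distinct_nth[OF vs(1), of h] vs by simp
  also have "\<dots> = (\<Sum>u\<in>{s,t}. h u)"
    by (rule sum.mono_neutral_right) (use finW st in \<open>auto simp: h_def inc_other[OF e] s_def t_def\<close>)
  also have "\<dots> = h s + h t" using st by simp
  also have "\<dots> = f $ idx s - f $ idx t"
    unfolding h_def inc_def s_def t_def using st(1) unfolding s_def t_def by auto
  finally show ?thesis unfolding e_def s_def t_def .
qed

lemma ker_BT: "mat_kernel (transpose_mat Bm) = {f \<in> carrier_vec nW. \<forall>e\<in>A. f $ idx (src e) = f $ idx (tgt e)}"
proof -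
  have BT: "transpose_mat Bm \<in> carrier_mat mA nW" using Bm by auto
  have "(transpose_mat Bm *\<^sub>v f = 0\<^sub>v mA) \<longleftrightarrow> (\<forall>e\<in>A. f $ idx (src e) = f $ idx (tgt e))"
    if f: "f \<in> carrier_vec nW" for f
  proof
    assume z: "transpose_mat Bm *\<^sub>v f = 0\<^sub>v mA"
    show "\<forall>e\<in>A. f $ idx (src e) = f $ idx (tgt e)"
    proof
      fix e assume "e \<in> A"
      then obtain j where j: "j < mA" "e = es ! j" using es by (metis in_set_conv_nth)
      have "(transpose_mat Bm *\<^sub>v f) $ j = 0" using z j by simp
      then show "f $ idx (src e) = f $ idx (tgt e)" using BT_app[OF f j(1)] j(2) by simp
    qed
  next
    assume h: "\<forall>e\<in>A. f $ idx (src e) = f $ idx (tgt e)"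
    show "transpose_mat Bm *\<^sub>v f = 0\<^sub>v mA"
      by (rule eq_vecI) (use BT BT_app[OF f] h es_A in auto)
  qed
  then show ?thesis unfolding mat_kernel[OF BT] by auto
qed

definition "Rel = {(u,v). {u,v} \<in> A}\<^sup>* \<inter> W \<times> W"
definition "Qc = W // Rel"
definition "cs = enum_set Qc"
definition "cls i = find_index cs (Rel `` {vs ! i})"
definition "rep j = idx (SOME x. x \<in> cs ! j)"

lemma find_index_nth: "distinct xs \<Longrightarrow> j < length xs \<Longrightarrow> find_index xs (xs ! j) = j"
  using find_index_in_set[of "xs ! j" xs] find_index_leq_length[of xs "xs ! j"] nth_eq_iff_index_eq
  by (metis nth_mem)

lemma ncomp_Qc: "ncomp W A = card Qc" unfolding ncomp_def Qc_def Rel_def by simp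

lemma equivR: "equiv W Rel"
proof (rule equivI)
  show "refl_on W Rel" unfolding Rel_def refl_on_def by auto
  have "sym {(u,v). {u,v} \<in> A}" unfolding sym_def by (auto simp: insert_commute)
  then have "sym ({(u,v). {u,v} \<in> A}\<^sup>*)" by (rule sym_rtrancl)
  then show "sym Rel" unfolding Rel_def sym_def by auto
  show "trans Rel" unfolding Rel_def by (rule transI) (auto intro: rtrancl_trans)
  show "Rel \<subseteq> W \<times> W" unfolding Rel_def by auto
qed

lemma finQ: "finite Qc" unfolding Qc_def by (rule finite_quotient[OF finW]) (auto simp: Rel_def)

lemma cs: "distinct cs" "set cs = Qc" "length cs = card Qc"
  unfolding cs_def using enum_set[OF finQ] length_enum_set[OF finQ] by auto

lemma cls: assumes i: "i < nW" shows "cls i < card Qc" "cs ! cls i = Rel `` {vs ! i}"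
proof -
  have "Rel `` {vs ! i} \<in> Qc" unfolding Qc_def using vs_W[OF i] by (rule quotientI)
  then show "cls i < card Qc" "cs ! cls i = Rel `` {vs ! i}" unfolding cls_def
    using cs find_index_leq_length[of cs "Rel `` {vs ! i}"] find_index_in_set[of "Rel `` {vs ! i}" cs] by auto
qed

lemma rep: assumes j: "j < card Qc" shows "rep j < nW" "Rel `` {vs ! rep j} = cs ! j" "cls (rep j) = j"
proof -
  have X: "cs ! j \<in> Qc" using cs j by (metis nth_mem)
  then have ne: "cs ! j \<noteq> {}" unfolding Qc_def using equivR in_quotient_imp_non_empty by blast
  define x where "x = (SOME x. x \<in> cs ! j)"
  have x: "x \<in> cs ! j" unfolding x_def using ne by (simp add: some_in_eq)
  have xW: "x \<in> W" using x X unfolding Qc_def using equivR in_quotient_imp_subset by blast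
  have rx: "rep j = idx x" unfolding rep_def x_def ..
  show r1: "rep j < nW" using idx[OF xW] rx by simp
  have vx: "vs ! rep j = x" using idx[OF xW] rx by simp
  show r2: "Rel `` {vs ! rep j} = cs ! j" unfolding vx
  proof -
    obtain y where y: "cs ! j = Rel `` {y}" "y \<in> W" using X unfolding Qc_def by (rule quotientE)
    then have "(y, x) \<in> Rel" using x by auto
    then have "Rel `` {y} = Rel `` {x}" by (rule equiv_class_eq[OF equivR])
    then show "Rel `` {x} = cs ! j" using y by simp
  qed
  show "cls (rep j) = j" unfolding cls_def r2 using cs j find_index_nth by metis
qed

lemma ker_const: assumes f: "f \<in> mat_kernel (transpose_mat Bm)" and uv: "(u, v) \<in> {(u,v). {u,v} \<in> A}\<^sup>*"
  shows "f $ idx u = f $ idx v"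
  using uv
proof (induct rule: rtrancl_induct)
  case base
  then show ?case by simp
next
  case (step y z)
  then have e: "{y, z} \<in> A" by auto
  have h: "f $ idx (src {y,z}) = f $ idx (tgt {y,z})" using f e unfolding ker_BT by auto
  have "{src {y,z}, tgt {y,z}} = {y, z}" using orient[OF e] by simp
  moreover obtain s t where "s = src {y,z}" "t = tgt {y,z}" by auto
  ultimately have "(s = y \<and> t = z) \<or> (s = z \<and> t = y)" "f $ idx s = f $ idx t" using h
    by (simp_all add: doubleton_eq_iff)
  then have "f $ idx y = f $ idx z" by auto
  then show ?case using step by simp
qed

lemma cls_eq: assumes i: "i < nW" and k: "k < nW" and r: "(vs ! i, vs ! k) \<in> Rel"
  shows "cls i = cls k"
proof -
  have "Rel `` {vs ! i} = Rel `` {vs ! k}" using equiv_class_eq[OF equivR r] .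
  then show ?thesis unfolding cls_def by simp
qed

lemma kernel_dim_BT: "kernel_dim (transpose_mat Bm) = card Qc"
proof -
  define c where "c = card Qc"
  have BT: "transpose_mat Bm \<in> carrier_mat mA nW" using Bm by auto
  interpret K: kernel mA nW "transpose_mat Bm" by (unfold_locales) (rule BT)
  interpret Vc: vec_space "TYPE(real)" c .
  define T where "T f = vec c (\<lambda>j. f $ rep j)" for f :: "real vec"
  have repc: "j < c \<Longrightarrow> rep j < nW" for j using rep c_def by auto
  interpret L: linear_map class_ring K.VK "module_vec TYPE(real) c" T
  proof (intro linear_map.intro)
    show "vectorspace class_ring K.VK" by unfold_locales
    show "vectorspace class_ring (module_vec TYPE(real) c)" by (rule vec_vs)
    show "mod_hom class_ring K.VK (module_vec TYPE(real) c) T"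
    proof (intro mod_hom.intro)
      show "Module.module class_ring K.VK" by unfold_locales
      show "Module.module class_ring (module_vec TYPE(real) c)" by (rule vec_module)
      show "mod_hom_axioms class_ring K.VK (module_vec TYPE(real) c) T"
        unfolding mod_hom_axioms_def LinearCombinations.module_hom_def
        using mat_kernel_carrier[OF BT]
        by (auto simp: module_vec_simps T_def class_ring_simps repc intro!: eq_vecI)
    qed
  qed
  have fd: "K.Ker.fin_dim"
  proof -
    obtain B where B: "finite B" "K.basis B" using kernel_basis_exists[OF BT] by auto
    then show ?thesis unfolding K.Ker.fin_dim_def K.Ker.basis_def by auto
  qed
  have const: "f $ i = f $ rep (cls i)" if f: "f \<in> mat_kernel (transpose_mat Bm)" and i: "i < nW" for f i
  proof -
    have ci: "cls i < card Qc" using cls[OF i] by simp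
    have "Rel `` {vs ! rep (cls i)} = Rel `` {vs ! i}" using rep(2)[OF ci] cls(2)[OF i] by simp
    then have "(vs ! i, vs ! rep (cls i)) \<in> Rel"
      using equivR vs_W[OF i] vs_W[OF rep(1)[OF ci]] by (metis eq_equiv_class_iff)
    then have "(vs ! i, vs ! rep (cls i)) \<in> {(u,v). {u,v} \<in> A}\<^sup>*" unfolding Rel_def by auto
    from ker_const[OF f this] show ?thesis using idx_nth[OF i] idx_nth[OF rep(1)[OF ci]] by simp
  qed
  have inj: "inj_on T (carrier K.VK)"
  proof (rule inj_onI)
    fix f g assume f: "f \<in> carrier K.VK" and g: "g \<in> carrier K.VK" and Tfg: "T f = T g"
    have fk: "f \<in> mat_kernel (transpose_mat Bm)" and gk: "g \<in> mat_kernel (transpose_mat Bm)" using f g by auto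
    have fc: "f \<in> carrier_vec nW" and gc: "g \<in> carrier_vec nW" using fk gk mat_kernel_carrier[OF BT] by auto
    show "f = g"
    proof (rule eq_vecI)
      fix i assume "i < dim_vec g"
      then have i: "i < nW" using gc by auto
      have ci: "cls i < c" using cls[OF i] c_def by simp
      have "f $ i = T f $ cls i" using const[OF fk i] ci unfolding T_def by simp
      also have "\<dots> = T g $ cls i" using Tfg by simp
      also have "\<dots> = g $ i" using const[OF gk i] ci unfolding T_def by simp
      finally show "f $ i = g $ i" .
    qed (use fc gc in auto)
  qed
  have surj: "T ` carrier K.VK = carrier (module_vec TYPE(real) c)"
  proof (intro equalityI subsetI)
    fix y assume "y \<in> T ` carrier K.VK"
    then show "y \<in> carrier (module_vec TYPE(real) c)" unfolding T_def by (auto simp: module_vec_simps)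
  next
    fix g assume "g \<in> carrier (module_vec TYPE(real) c)"
    then have g: "g \<in> carrier_vec c" by (simp add: module_vec_simps)
    define f where "f = vec nW (\<lambda>i. g $ cls i)"
    have fk: "f \<in> mat_kernel (transpose_mat Bm)" unfolding ker_BT
    proof (intro CollectI conjI ballI)
      show "f \<in> carrier_vec nW" unfolding f_def by simp
      fix e assume e: "e \<in> A"
      have s: "src e \<in> W" and t: "tgt e \<in> W" using src_W[OF e] tgt_W[OF e] by auto
      have "(src e, tgt e) \<in> {(u,v). {u,v} \<in> A}" using orient[OF e] e by auto
      then have "(vs ! idx (src e), vs ! idx (tgt e)) \<in> Rel" unfolding Rel_def using s t idx by auto
      then have "cls (idx (src e)) = cls (idx (tgt e))" using cls_eq idx s t by blast
      then show "f $ idx (src e) = f $ idx (tgt e)" unfolding f_def using idx s t by simp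
    qed
    have "T f = g" unfolding T_def f_def
      by (rule eq_vecI) (use g repc rep(3) c_def in auto)
    then show "g \<in> T ` carrier K.VK" using fk by auto
  qed
  have "K.Ker.dim = Vc.dim" by (rule L.dim_eq[OF fd inj surj])
  then show ?thesis using Vc.dim_is_n c_def by simp
qed

lemma main_rank: "mat_rank (norm_laplacian W A) = grank W A"
  using rank_norm_lap rank_Bm kernel_dim_BT ncomp_Qc unfolding grank_def nW_def by simp

lemma main_n0: "n0 (edge_laplacian src tgt A) = card A - grank W A" "grank W A \<le> card A"
proof -
  have r: "vec_space.rank nW Bm = grank W A"
    using rank_Bm kernel_dim_BT ncomp_Qc unfolding grank_def nW_def by simp
  show "n0 (edge_laplacian src tgt A) = card A - grank W A" using n0_edge_rank r mA_def by simp
  show "grank W A \<le> card A" using rank_nullity_mat[OF Bm] r mA_def by simp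
qed

end

lemma equiv_comp: "equiv V ({(u,v). {u,v} \<in> A}\<^sup>* \<inter> V \<times> V)"
proof (rule equivI)
  show "refl_on V ({(u,v). {u,v} \<in> A}\<^sup>* \<inter> V \<times> V)" unfolding refl_on_def by auto
  have "sym {(u,v). {u,v} \<in> A}" unfolding sym_def by (auto simp: insert_commute)
  then have "sym ({(u,v). {u,v} \<in> A}\<^sup>*)" by (rule sym_rtrancl)
  then show "sym ({(u,v). {u,v} \<in> A}\<^sup>* \<inter> V \<times> V)" unfolding sym_def by auto
  show "trans ({(u,v). {u,v} \<in> A}\<^sup>* \<inter> V \<times> V)" by (rule transI) (auto intro: rtrancl_trans)
  show "{(u,v). {u,v} \<in> A}\<^sup>* \<inter> V \<times> V \<subseteq> V \<times> V" by auto
qed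

lemma path_in_union: "(x, y) \<in> {(u,v). {u,v} \<in> A}\<^sup>* \<Longrightarrow> x = y \<or> (x \<in> \<Union>A \<and> y \<in> \<Union>A)"
  by (induct rule: rtrancl_induct) auto

lemma ncomp_extend:
  assumes V: "finite V" and U: "\<Union>A \<subseteq> V"
  shows "ncomp V A = ncomp (\<Union>A) A + card (V - \<Union>A)"
proof -
  define r where "r = {(u,v). {u,v} \<in> A}"
  define U where "U = \<Union>A"
  define RV where "RV = r\<^sup>* \<inter> V \<times> V"
  define RU where "RU = r\<^sup>* \<inter> U \<times> U"
  have UV: "U \<subseteq> V" using U unfolding U_def .
  have finU: "finite U" using UV V finite_subset by blast
  have c1: "RV `` {x} = RU `` {x}" if x: "x \<in> U" for x
    using x UV path_in_union[of x _ A] unfolding RV_def RU_def r_def U_def by blast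
  have c2: "RV `` {x} = {x}" if x: "x \<in> V - U" for x
    using x path_in_union[of x _ A] unfolding RV_def r_def U_def by blast
  have QV: "V // RV = U // RU \<union> (\<lambda>x. {x}) ` (V - U)"
  proof -
    have "V // RV = (\<lambda>x. RV `` {x}) ` U \<union> (\<lambda>x. RV `` {x}) ` (V - U)"
      unfolding quotient_def using UV by blast
    also have "(\<lambda>x. RV `` {x}) ` U = U // RU" unfolding quotient_def using c1 by auto
    also have "(\<lambda>x. RV `` {x}) ` (V - U) = (\<lambda>x. {x}) ` (V - U)" using c2 by auto
    finally show ?thesis .
  qed
  have sub: "X \<subseteq> U" if "X \<in> U // RU" for X
    using that unfolding quotient_def RU_def by auto
  have disj: "U // RU \<inter> (\<lambda>x. {x}) ` (V - U) = {}" using sub by auto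
  have f1: "finite (U // RU)" by (rule finite_quotient[OF finU]) (auto simp: RU_def)
  have f2: "finite ((\<lambda>x. {x}) ` (V - U))" using V by auto
  have "card (V // RV) = card (U // RU) + card ((\<lambda>x. {x}) ` (V - U))"
    unfolding QV by (rule card_Un_disjoint[OF f1 f2 disj])
  also have "card ((\<lambda>x. {x}) ` (V - U)) = card (V - U)" by (rule card_image) (auto simp: inj_on_def)
  finally show ?thesis unfolding ncomp_def RV_def RU_def r_def U_def .
qed

lemma grank_extend:
  assumes V: "finite V" and U: "\<Union>A \<subseteq> V"
  shows "grank (\<Union>A) A = grank V A"
proof -
  have "card V = card (\<Union>A) + card (V - \<Union>A)"
    using V U by (metis card_Diff_subset card_mono finite_subset le_add_diff_inverse)
  then show ?thesis unfolding grank_def using ncomp_extend[OF V U] by simp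
qed

lemma ncomp_less:
  assumes W: "finite W" and uv: "u \<in> W" "v \<in> W" "u \<noteq> v" "{u, v} \<in> A"
  shows "ncomp W A < card W"
proof -
  define R where "R = {(u,v). {u,v} \<in> A}\<^sup>* \<inter> W \<times> W"
  have eq: "W // R = (\<lambda>x. R `` {x}) ` W" unfolding quotient_def by blast
  have "(u, v) \<in> R" unfolding R_def using uv by auto
  then have "R `` {u} = R `` {v}" using equiv_class_eq[OF equiv_comp[of W A]] unfolding R_def by simp
  then have "\<not> inj_on (\<lambda>x. R `` {x}) W" using uv unfolding inj_on_def by blast
  then have "card ((\<lambda>x. R `` {x}) ` W) \<noteq> card W" using inj_on_iff_eq_card[OF W] by blast
  moreover have "card ((\<lambda>x. R `` {x}) ` W) \<le> card W" by (rule card_image_le[OF W])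
  ultimately show ?thesis unfolding ncomp_def R_def[symmetric] eq by simp
qed

lemma key_alg:
  fixes a e ra re :: real
  assumes "a > 0" "e > 0" "ra > 0" "re > 0"
  shows "(a / ra \<le> e / re) \<longleftrightarrow> (re - ra \<le> (e - a) / (e / re))"
    and "(a / ra \<le> e / re) \<longleftrightarrow> ((a - ra) / a \<le> (e - re) / e)"
  using assms by (simp_all add: field_simps)

theorem theorem3p15:
  fixes V :: "'a set" and E :: "'a set set"
    and src tgt :: "'a set \<Rightarrow> 'a"
  assumes "simple_graph V E"
    and "E \<noteq> {}"
    and "no_isolated V E"
    and "\<forall>e\<in>E. e = {src e, tgt e}"
  shows "(uniformly_dense V E
          \<longleftrightarrow> (\<forall>A. A \<subseteq> E \<and> A \<noteq> {} \<longrightarrow>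
                real (mat_rank (norm_laplacian V E))
                - real (mat_rank (norm_laplacian (restr_vertices A) A))
                \<le> (real (card E) - real (card A)) / density V E))
       \<and> (uniformly_dense V E
          \<longleftrightarrow> (\<forall>A. A \<subseteq> E \<and> A \<noteq> {} \<longrightarrow>
                real (n0 (edge_laplacian src tgt A)) / real (card A)
                \<le> real (n0 (edge_laplacian src tgt E)) / real (card E)))"
proof -
  have finV: "finite V" and edges: "\<And>e. e \<in> E \<Longrightarrow> \<exists>u v. u \<noteq> v \<and> u \<in> V \<and> v \<in> V \<and> e = {u, v}"
    using assms(1) unfolding simple_graph_def by auto
  have finE: "finite E"
  proof -
    have "E \<subseteq> Pow V" using edges by blast
    then show ?thesis using finV by (meson finite_Pow_iff finite_subset)
  qed
  have og: "orgraph A src tgt" if A: "A \<subseteq> E" for A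
  proof
    show "finite A" using A finE finite_subset by blast
    fix e assume e: "e \<in> A"
    then show "e = {src e, tgt e}" using A assms(4) by auto
    obtain u v where uv: "u \<noteq> v" "e = {u, v}" using edges e A by blast
    show "src e \<noteq> tgt e"
    proof
      assume "src e = tgt e"
      then have "e = {src e}" using \<open>e = {src e, tgt e}\<close> by simp
      then show False using uv by (metis doubleton_eq_iff insert_absorb2)
    qed
  qed
  have UV: "\<Union>A \<subseteq> V" if "A \<subseteq> E" for A using that edges by blast
  have UE: "\<Union>E = V" using UV[of E] assms(3) unfolding no_isolated_def by blast
  have rank: "mat_rank (norm_laplacian (restr_vertices A) A) = grank V A" if A: "A \<subseteq> E" for A
    using orgraph.main_rank[OF og[OF A]] unfolding orgraph.W_def[OF og[OF A]] restr_vertices_def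
    using grank_extend[OF finV UV[OF A]] by simp
  have rankE: "mat_rank (norm_laplacian V E) = grank V E"
    using rank[of E] UE unfolding restr_vertices_def by simp
  have n0A: "real (n0 (edge_laplacian src tgt A)) = real (card A) - real (grank V A)" if A: "A \<subseteq> E" for A
    using orgraph.main_n0[OF og[OF A]] unfolding orgraph.W_def[OF og[OF A]]
    using grank_extend[OF finV UV[OF A]] by (simp add: of_nat_diff)
  have pos: "grank V A \<ge> 1" if A: "A \<subseteq> E" "A \<noteq> {}" for A
  proof -
    obtain e where e: "e \<in> A" using A by auto
    obtain u v where uv: "u \<noteq> v" "e = {u, v}" using edges e A by blast
    have fin: "finite (\<Union>A)" using UV[OF A(1)] finV finite_subset by blast
    have "ncomp (\<Union>A) A < card (\<Union>A)" by (rule ncomp_less[OF fin, of u v]) (use uv e in auto)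
    then have "grank (\<Union>A) A \<ge> 1" unfolding grank_def by simp
    then show ?thesis using grank_extend[OF finV UV[OF A(1)]] by simp
  qed
  have cpos: "card A \<ge> 1" if A: "A \<subseteq> E" "A \<noteq> {}" for A
    using A finE by (metis One_nat_def Suc_leI card_gt_0_iff finite_subset)
  have step: "((density V A \<le> density V E) \<longleftrightarrow>
               (real (mat_rank (norm_laplacian V E)) - real (mat_rank (norm_laplacian (restr_vertices A) A))
                \<le> (real (card E) - real (card A)) / density V E))
           \<and> ((density V A \<le> density V E) \<longleftrightarrow>
               (real (n0 (edge_laplacian src tgt A)) / real (card A)
                \<le> real (n0 (edge_laplacian src tgt E)) / real (card E)))"
    if A: "A \<subseteq> E" "A \<noteq> {}" for A
  proof -
    have a: "real (card A) > 0" and e: "real (card E) > 0" using cpos[OF A] cpos[of E] assms(2) by auto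
    have ra: "real (grank V A) > 0" and re: "real (grank V E) > 0" using pos[OF A] pos[of E] assms(2) by auto
    have nE: "real (n0 (edge_laplacian src tgt E)) = real (card E) - real (grank V E)"
      by (rule n0A) simp
    show ?thesis unfolding density_def rankE rank[OF A(1)] n0A[OF A(1)] nE
      by (intro conjI) (rule key_alg[OF a e ra re])+
  qed
  show ?thesis unfolding uniformly_dense_def using step by blast
qed

end
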